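(* Let $N\ge1$ and $p$ as in the standing assumptions. For every $R\in[0,1]$, $$\limsup_{\alpha\to\infty}S_{\alpha,R}\,\alpha^{N-2-\frac{2N}{p+1}}\le\min\left\{e^{\frac{4}{R(p+1)}},e^{\frac{4}{(1-R)(p+1)}}\right\}S\le e^{\frac{8}{p+1}}S,$$ with the convention that $e^{4/(R(p+1))}=+\infty$ if $R=0$ and $e^{4/((1-R)(p+1))}=+\infty$ if $R=1$.
   Context: $B=B(0,1)\subset\mathbb R^N$; standing assumption: $p\in(1,\frac{N+2}{N-2})$ if $N\ge3$, $p>1$ if $N=1,2$. For $\alpha>0$, $R\in(0,1)$, $V_{R,\alpha}(r)=(1-r/R)^\alpha$ for $0\le r<R$ and $\left(1-\frac{1-r}{1-R}\right)^\alpha$ for $R\le r\le1$; $V_{0,\alpha}(|x|)=|x|^\alpha$, $V_{1,\alpha}(|x|)=(1-|x|)^\alpha$. $S_{\alpha,R}=\inf_{0\ne u\in H^1_0(B)}\frac{\int_B|Du|^2}{(\int_BV_{R,\alpha}(|x|)|u|^{p+1})^{2/(p+1)}}$. $S=\inf_{0\ne u\in H^1_0(B)}\frac{\int_B|Du|^2}{(\int_B|u|^{p+1})^{2/(p+1)}}$. *)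

theory Defs
  imports "HOL-Analysis.Analysis"
begin

text \<open>Smooth (C-infinity) real functions on a Euclidean space: there is a family of
  functions containing f, closed under taking partial derivatives, each member being
  (Frechet) differentiable everywhere with derivative given by its partials.\<close>
definition smooth_fun :: "('a::euclidean_space \<Rightarrow> real) \<Rightarrow> bool" where
  "smooth_fun f \<longleftrightarrow> (\<exists>F. f \<in> F \<and> (\<forall>h\<in>F. \<exists>D. (\<forall>i\<in>Basis. D i \<in> F) \<and>
      (\<forall>x. (h has_derivative (\<lambda>v. \<Sum>i\<in>Basis. (v \<bullet> i) * D i x)) (at x))))"

abbreviation unit_ball :: "'a::euclidean_space set" where
  "unit_ball \<equiv> ball 0 1"

definition test_fun :: "('a::euclidean_space \<Rightarrow> real) \<Rightarrow> ('a \<Rightarrow> 'a) \<Rightarrow> bool" where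
  "test_fun \<phi> G \<longleftrightarrow> smooth_fun \<phi> \<and> (\<forall>x. (\<phi> has_derivative (\<lambda>v. G x \<bullet> v)) (at x)) \<and>
     (\<exists>K. compact K \<and> K \<subseteq> unit_ball \<and> (\<forall>x. x \<notin> K \<longrightarrow> \<phi> x = 0))"

text \<open>H^1_0(B) = closure of C_c^infinity(B) in H^1(B): u is in H^1_0(B) with (weak)
  gradient g iff u, |g| are in L^2(B) and there are test functions phi_n with
  phi_n \<rightarrow> u and grad phi_n \<rightarrow> g in L^2(B).\<close>
definition H10 :: "('a::euclidean_space \<Rightarrow> real) \<Rightarrow> ('a \<Rightarrow> 'a) \<Rightarrow> bool" where
  "H10 u g \<longleftrightarrow> u \<in> borel_measurable lborel \<and> g \<in> borel_measurable lborel \<and>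
     set_integrable lborel unit_ball (\<lambda>x. (u x)\<^sup>2) \<and>
     set_integrable lborel unit_ball (\<lambda>x. (norm (g x))\<^sup>2) \<and>
     (\<exists>\<phi> G. (\<forall>n. test_fun (\<phi> n) (G n)) \<and>
        (\<lambda>n. LINT x : unit_ball | lborel. (\<phi> n x - u x)\<^sup>2) \<longlonglongrightarrow> 0 \<and>
        (\<lambda>n. LINT x : unit_ball | lborel. (norm (G n x - g x))\<^sup>2) \<longlonglongrightarrow> 0)"

definition H10_nonzero :: "('a::euclidean_space \<Rightarrow> real) \<Rightarrow> bool" where
  "H10_nonzero u \<longleftrightarrow> \<not> (AE x in lborel. x \<in> unit_ball \<longrightarrow> u x = 0)"

definition Sweight :: "(real \<Rightarrow> real) \<Rightarrow> real \<Rightarrow> 'a::euclidean_space itself \<Rightarrow> real" where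
  "Sweight W p _ = Inf {(LINT x : unit_ball | lborel. (norm (g x))\<^sup>2) /
        (LINT x : unit_ball | lborel. W (norm x) * \<bar>u x\<bar> powr (p + 1)) powr (2 / (p + 1))
      | (u :: 'a \<Rightarrow> real) g. H10 u g \<and> H10_nonzero u}"

definition V :: "real \<Rightarrow> real \<Rightarrow> real \<Rightarrow> real" where
  "V R \<alpha> r = (if R = 0 then r powr \<alpha>
     else if R = 1 then (1 - r) powr \<alpha>
     else if r < R then (1 - r / R) powr \<alpha>
     else (1 - (1 - r) / (1 - R)) powr \<alpha>)"

definition S_alpha_R :: "real \<Rightarrow> real \<Rightarrow> real \<Rightarrow> 'a::euclidean_space itself \<Rightarrow> real" where
  "S_alpha_R p \<alpha> R T = Sweight (V R \<alpha>) p T"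

definition S_const :: "real \<Rightarrow> 'a::euclidean_space itself \<Rightarrow> real" where
  "S_const p T = Sweight (\<lambda>_. 1) p T"

text \<open>Standing assumption on p, N = dimension.\<close>
definition admissible_p :: "nat \<Rightarrow> real \<Rightarrow> bool" where
  "admissible_p N p \<longleftrightarrow> 1 < p \<and> (N \<ge> 3 \<longrightarrow> p < (real N + 2) / (real N - 2))"

end

theory Submission
  imports Defs "HOL-Computational_Algebra.Polynomial"
begin


lemma nn_integral_affine_eucl:
  fixes f :: "'a::euclidean_space \<Rightarrow> ennreal" and c :: real
  assumes [measurable]: "f \<in> borel_measurable borel" and c: "c \<noteq> 0"
  shows "(\<integral>\<^sup>+x. f x \<partial>lborel) = ennreal (\<bar>c\<bar>^DIM('a)) * (\<integral>\<^sup>+x. f (t + c *\<^sub>R x) \<partial>lborel)"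
  by (subst lborel_affine[OF c, of t])
     (simp add: nn_integral_density nn_integral_distr nn_integral_cmult)

lemma integrable_affine_eucl:
  fixes f :: "'a::euclidean_space \<Rightarrow> real"
  assumes f: "integrable lborel f" and c: "c \<noteq> 0"
  shows "integrable lborel (\<lambda>x. f (t + c *\<^sub>R x))"
proof -
  have m[measurable]: "f \<in> borel_measurable borel" using f[THEN borel_measurable_integrable] by simp
  have "(\<integral>\<^sup>+x. ennreal (norm (f x)) \<partial>lborel) < \<infinity>" using f unfolding integrable_iff_bounded by simp
  then have "ennreal (\<bar>c\<bar>^DIM('a)) * (\<integral>\<^sup>+x. ennreal (norm (f (t + c *\<^sub>R x))) \<partial>lborel) < \<infinity>"
    by (subst (asm) nn_integral_affine_eucl[where c=c and t=t]) (auto simp: c)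
  moreover have "ennreal (\<bar>c\<bar>^DIM('a)) > 0" using c by simp
  ultimately have "(\<integral>\<^sup>+x. ennreal (norm (f (t + c *\<^sub>R x))) \<partial>lborel) < \<infinity>"
    by (auto simp add: ennreal_mult_less_top c top.not_eq_extremum)
  then show ?thesis unfolding integrable_iff_bounded by simp
qed

lemma integrable_affine_eucl_iff:
  fixes f :: "'a::euclidean_space \<Rightarrow> real"
  assumes c: "c \<noteq> 0"
  shows "integrable lborel (\<lambda>x. f (t + c *\<^sub>R x)) \<longleftrightarrow> integrable lborel f"
proof
  assume "integrable lborel (\<lambda>x. f (t + c *\<^sub>R x))"
  from integrable_affine_eucl[OF this, of "1/c" "- t /\<^sub>R c"] c
  show "integrable lborel f" by (simp add: algebra_simps)
qed (use integrable_affine_eucl c in auto)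

lemma integral_affine_eucl:
  fixes f :: "'a::euclidean_space \<Rightarrow> real" and c :: real
  assumes c: "c \<noteq> 0"
  shows "(\<integral>x. f x \<partial>lborel) = \<bar>c\<bar>^DIM('a) * (\<integral>x. f (t + c *\<^sub>R x) \<partial>lborel)"
proof cases
  assume f[measurable]: "integrable lborel f" then show ?thesis
    using c f f[THEN borel_measurable_integrable] f[THEN integrable_affine_eucl, of c t]
    by (subst lborel_affine[OF c, of t])
       (simp add: integral_density integral_distr)
next
  assume "\<not> integrable lborel f" with c show ?thesis
    by (simp add: integrable_affine_eucl_iff not_integrable_integral_eq)
qed



lemma smooth_fun_affine:
  fixes f :: "'a::euclidean_space \<Rightarrow> real"
  assumes "smooth_fun f"
  shows "smooth_fun (\<lambda>x. f (t + c *\<^sub>R x))"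
proof -
  obtain F where fF: "f \<in> F" and F: "\<forall>h\<in>F. \<exists>D. (\<forall>i\<in>Basis. D i \<in> F) \<and>
      (\<forall>x. (h has_derivative (\<lambda>v. \<Sum>i\<in>Basis. (v \<bullet> i) * D i x)) (at x))"
    using assms unfolding smooth_fun_def by blast
  define F' where "F' = {(\<lambda>x. k * h (t + c *\<^sub>R x)) | k h. h \<in> F}"
  have "(\<lambda>x. f (t + c *\<^sub>R x)) \<in> F'"
    unfolding F'_def using fF by (intro CollectI exI[of _ 1] exI[of _ f]) auto
  moreover have "\<exists>D. (\<forall>i\<in>Basis. D i \<in> F') \<and>
      (\<forall>x. (h' has_derivative (\<lambda>v. \<Sum>i\<in>Basis. (v \<bullet> i) * D i x)) (at x))" if hF': "h' \<in> F'" for h'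
  proof -
    obtain k h where h': "h' = (\<lambda>x. k * h (t + c *\<^sub>R x))" and hF: "h \<in> F"
      using hF' unfolding F'_def by blast
    obtain D where DF: "\<forall>i\<in>Basis. D i \<in> F" and Dd: "\<forall>x. (h has_derivative (\<lambda>v. \<Sum>i\<in>Basis. (v \<bullet> i) * D i x)) (at x)"
      using F hF by blast
    define D' where "D' i = (\<lambda>x. (k * c) * D i (t + c *\<^sub>R x))" for i
    have "\<forall>i\<in>Basis. D' i \<in> F'"
      unfolding F'_def D'_def using DF by blast
    moreover have "(h' has_derivative (\<lambda>v. \<Sum>i\<in>Basis. (v \<bullet> i) * D' i x)) (at x)" for x
    proof -
      have A: "((\<lambda>x. t + c *\<^sub>R x) has_derivative (\<lambda>v. c *\<^sub>R v)) (at x)"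
        by (auto intro!: derivative_eq_intros)
      have "((\<lambda>x. h (t + c *\<^sub>R x)) has_derivative (\<lambda>v. \<Sum>i\<in>Basis. ((c *\<^sub>R v) \<bullet> i) * D i (t + c *\<^sub>R x))) (at x)"
        using has_derivative_compose[OF A Dd[rule_format, of "t + c *\<^sub>R x"]] by simp
      then have "((\<lambda>x. k * h (t + c *\<^sub>R x)) has_derivative (\<lambda>v. k * (\<Sum>i\<in>Basis. ((c *\<^sub>R v) \<bullet> i) * D i (t + c *\<^sub>R x)))) (at x)"
        by (rule has_derivative_mult_right)
      moreover have "(\<lambda>v. k * (\<Sum>i\<in>Basis. ((c *\<^sub>R v) \<bullet> i) * D i (t + c *\<^sub>R x))) = (\<lambda>v. \<Sum>i\<in>Basis. (v \<bullet> i) * D' i x)"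
        by (auto simp: D'_def sum_distrib_left intro!: sum.cong)
      ultimately show ?thesis using h' by simp
    qed
    ultimately show ?thesis by blast
  qed
  ultimately show ?thesis unfolding smooth_fun_def by blast
qed

lemma test_fun_affine:
  fixes \<phi> :: "'a::euclidean_space \<Rightarrow> real"
  assumes "test_fun \<phi> G" and c: "c \<noteq> 0"
    and sub: "\<And>x. t + c *\<^sub>R x \<in> unit_ball \<Longrightarrow> x \<in> unit_ball"
  shows "test_fun (\<lambda>x. \<phi> (t + c *\<^sub>R x)) (\<lambda>x. c *\<^sub>R G (t + c *\<^sub>R x))"
proof -
  have sm: "smooth_fun \<phi>" and d: "\<And>x. (\<phi> has_derivative (\<lambda>v. G x \<bullet> v)) (at x)"
    using assms unfolding test_fun_def by auto
  obtain K where K: "compact K" "K \<subseteq> unit_ball" "\<And>x. x \<notin> K \<Longrightarrow> \<phi> x = 0"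
    using assms unfolding test_fun_def by blast
  define K' where "K' = (\<lambda>y. (1/c) *\<^sub>R (y - t)) ` K"
  have "compact K'" unfolding K'_def
    by (intro compact_continuous_image K continuous_intros)
  moreover have "K' \<subseteq> unit_ball"
  proof
    fix x assume "x \<in> K'"
    then obtain y where "y \<in> K" "x = (1/c) *\<^sub>R (y - t)" unfolding K'_def by blast
    then have "t + c *\<^sub>R x = y" using c by simp
    then show "x \<in> unit_ball" using sub K(2) \<open>y \<in> K\<close> by blast
  qed
  moreover have "\<phi> (t + c *\<^sub>R x) = 0" if "x \<notin> K'" for x
  proof -
    have "t + c *\<^sub>R x \<notin> K"
    proof
      assume "t + c *\<^sub>R x \<in> K"
      then have "(1/c) *\<^sub>R ((t + c *\<^sub>R x) - t) \<in> K'" unfolding K'_def by blast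
      then show False using that c by simp
    qed
    then show ?thesis using K(3) by blast
  qed
  moreover have "((\<lambda>x. \<phi> (t + c *\<^sub>R x)) has_derivative (\<lambda>v. (c *\<^sub>R G (t + c *\<^sub>R x)) \<bullet> v)) (at x)" for x
  proof -
    have A: "((\<lambda>x. t + c *\<^sub>R x) has_derivative (\<lambda>v. c *\<^sub>R v)) (at x)"
      by (auto intro!: derivative_eq_intros)
    show ?thesis using has_derivative_compose[OF A d] by simp
  qed
  ultimately show ?thesis unfolding test_fun_def using smooth_fun_affine[OF sm] by blast
qed

lemma test_fun_support:
  fixes \<phi> :: "'a::euclidean_space \<Rightarrow> real"
  assumes "test_fun \<phi> G"
  shows "\<exists>K. compact K \<and> K \<subseteq> unit_ball \<and> (\<forall>x. x \<notin> K \<longrightarrow> \<phi> x = 0 \<and> G x = 0)"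
proof -
  have d: "\<And>x. (\<phi> has_derivative (\<lambda>v. G x \<bullet> v)) (at x)"
    using assms unfolding test_fun_def by auto
  obtain K where K: "compact K" "K \<subseteq> unit_ball" "\<And>x. x \<notin> K \<Longrightarrow> \<phi> x = 0"
    using assms unfolding test_fun_def by blast
  have "G x = 0" if x: "x \<notin> K" for x
  proof -
    have o: "open (- K)" using K(1) by (simp add: compact_imp_closed open_Compl)
    have "((\<lambda>_. 0::real) has_derivative (\<lambda>v. 0)) (at x)" by simp
    then have "(\<phi> has_derivative (\<lambda>v. 0)) (at x)"
      by (rule has_derivative_transform_within_open[OF _ o]) (use x K(3) in auto)
    then have "(\<lambda>v. G x \<bullet> v) = (\<lambda>v. 0)" using has_derivative_unique d by blast
    then have "G x \<bullet> G x = 0" by meson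
    then show ?thesis by simp
  qed
  then show ?thesis using K by blast
qed



definition hP :: "real poly \<Rightarrow> real \<Rightarrow> real" where
  "hP P t = (if 0 < t then poly P (1/t) * exp (-1/t) else 0)"

definition dP :: "real poly \<Rightarrow> real poly" where
  "dP P = monom 1 2 * (P - pderiv P)"

lemma poly_exp_lim: fixes P :: "real poly" shows "((\<lambda>s. poly P s * exp (-s)) \<longlongrightarrow> 0) at_top"
proof -
  have "((\<lambda>s. \<Sum>i\<le>degree P. coeff P i * (s ^ i / exp s)) \<longlongrightarrow> (\<Sum>i\<le>degree P. coeff P i * 0)) at_top"
    by (intro tendsto_sum tendsto_mult tendsto_const tendsto_power_div_exp_0)
  moreover have "(\<lambda>s. \<Sum>i\<le>degree P. coeff P i * (s ^ i / exp s)) = (\<lambda>s. poly P s * exp (-s))"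
    by (auto simp: poly_altdef sum_divide_distrib[symmetric] exp_minus field_simps)
  ultimately show ?thesis by simp
qed

lemma hP_deriv: "(hP P has_real_derivative hP (dP P) t) (at t)"
proof -
  consider "t > 0" | "t < 0" | "t = 0" by linarith
  then show ?thesis
  proof cases
    case 1
    have d: "((\<lambda>t. poly P (1/t) * exp (-1/t)) has_real_derivative
       (poly (pderiv P) (1/t) * (- 1 / t^2)) * exp (-1/t) + poly P (1/t) * (exp (-1/t) * (1 / t^2))) (at t)"
      using 1 by (auto intro!: derivative_eq_intros DERIV_chain2[OF poly_DERIV] simp: power2_eq_square)
    have eq: "(poly (pderiv P) (1/t) * (- 1 / t^2)) * exp (-1/t) + poly P (1/t) * (exp (-1/t) * (1 / t^2))
       = hP (dP P) t"
      using 1 by (simp add: hP_def dP_def poly_monom field_simps)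
    show ?thesis
      by (rule has_field_derivative_transform_within_open[where S="{0<..}", OF d[unfolded eq]]) (use 1 in \<open>auto simp: hP_def\<close>)
  next
    case 2
    have d: "((\<lambda>t. 0) has_real_derivative hP (dP P) t) (at t)" using 2 by (simp add: hP_def)
    show ?thesis
      by (rule has_field_derivative_transform_within_open[where S="{..<0}", OF d]) (use 2 in \<open>auto simp: hP_def\<close>)
  next
    case 3
    have R: "((\<lambda>h. hP P h / h) \<longlongrightarrow> 0) (at_right 0)"
      unfolding filterlim_at_right_to_top
    proof -
      have "((\<lambda>s. poly (monom 1 1 * P) s * exp (-s)) \<longlongrightarrow> 0) at_top" by (rule poly_exp_lim)
      moreover have "\<forall>\<^sub>F s in at_top. poly (monom 1 1 * P) s * exp (-s) = hP P (inverse s) / inverse s"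
        using eventually_gt_at_top[of 0]
        by eventually_elim (simp add: hP_def poly_monom field_simps)
      ultimately show "((\<lambda>s. hP P (inverse s) / inverse s) \<longlongrightarrow> 0) at_top"
        using tendsto_cong by fastforce
    qed
    have L: "((\<lambda>h. hP P h / h) \<longlongrightarrow> 0) (at_left 0)"
    proof -
      have "\<forall>\<^sub>F h in at_left (0::real). 0 = hP P h / h"
        by (simp add: eventually_at_left_field hP_def) (auto intro: exI[of _ "-1"])
      then show ?thesis using tendsto_cong[of "\<lambda>_. 0"] by (metis (mono_tags) tendsto_const)
    qed
    have "((\<lambda>h. hP P h / h) \<longlongrightarrow> 0) (at 0)" by (rule filterlim_split_at[OF L R])
    then show ?thesis using 3 unfolding DERIV_def by (simp add: hP_def)
  qed
qed

lemma hP_cont: "isCont (hP P) t"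
  using hP_deriv DERIV_isCont by blast

lemma hP_pos_iff: "hP 1 t > 0 \<longleftrightarrow> t > 0"
  by (simp add: hP_def)



inductive_set Fam :: "('a::euclidean_space \<Rightarrow> real) set" where
  cst: "(\<lambda>x. k) \<in> Fam"
| crd: "(\<lambda>x. x \<bullet> j) \<in> Fam"
| add: "f \<in> Fam \<Longrightarrow> g \<in> Fam \<Longrightarrow> (\<lambda>x. f x + g x) \<in> Fam"
| mul: "f \<in> Fam \<Longrightarrow> g \<in> Fam \<Longrightarrow> (\<lambda>x. f x * g x) \<in> Fam"
| bmp: "(\<lambda>x. hP P (1/4 - x \<bullet> x)) \<in> Fam"

lemma q_deriv: "((\<lambda>x::'a::euclidean_space. 1/4 - x \<bullet> x) has_derivative (\<lambda>v. - (2 * (x \<bullet> v)))) (at x)"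
  by (auto intro!: derivative_eq_intros simp: inner_commute)

lemma bump_deriv:
  "((\<lambda>x::'a::euclidean_space. hP P (1/4 - x \<bullet> x)) has_derivative
      (\<lambda>v. hP (dP P) (1/4 - x \<bullet> x) * (- (2 * (x \<bullet> v))))) (at x)"
proof -
  have "((\<lambda>x. hP P (1/4 - x \<bullet> x)) has_derivative (\<lambda>v. hP (dP P) (1/4 - x \<bullet> x) * (- (2 * (x \<bullet> v))))) (at x)"
    using has_derivative_compose[OF q_deriv hP_deriv[unfolded has_field_derivative_def]]
    by (simp add: mult.commute)
  then show ?thesis .
qed

lemma Fam_deriv:
  "f \<in> Fam \<Longrightarrow> \<exists>D. (\<forall>i\<in>Basis. D i \<in> (Fam :: ('a::euclidean_space \<Rightarrow> real) set)) \<and>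
      (\<forall>x. (f has_derivative (\<lambda>v. \<Sum>i\<in>Basis. (v \<bullet> i) * D i x)) (at x))"
proof (induction rule: Fam.induct)
  case (cst k)
  show ?case
    by (rule exI[of _ "\<lambda>i x. 0"]) (auto intro: Fam.cst)
next
  case (crd j)
  have "((\<lambda>x::'a. x \<bullet> j) has_derivative (\<lambda>v. \<Sum>i\<in>Basis. (v \<bullet> i) * (j \<bullet> i))) (at x)" for x
  proof -
    have "((\<lambda>x::'a. x \<bullet> j) has_derivative (\<lambda>v. v \<bullet> j)) (at x)"
      by (auto intro!: derivative_eq_intros)
    moreover have "(\<lambda>v. v \<bullet> j) = (\<lambda>v. \<Sum>i\<in>Basis. (v \<bullet> i) * (j \<bullet> i))"
      by (rule ext, subst euclidean_inner) simp
    ultimately show ?thesis by simp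
  qed
  then show ?case
    by (intro exI[of _ "\<lambda>i x. j \<bullet> i"]) (auto intro: Fam.cst)
next
  case (add f g)
  then obtain Df Dg where Df: "\<forall>i\<in>Basis. Df i \<in> Fam" "\<forall>x. (f has_derivative (\<lambda>v. \<Sum>i\<in>Basis. (v \<bullet> i) * Df i x)) (at x)"
    and Dg: "\<forall>i\<in>Basis. Dg i \<in> Fam" "\<forall>x. (g has_derivative (\<lambda>v. \<Sum>i\<in>Basis. (v \<bullet> i) * Dg i x)) (at x)"
    by blast
  show ?case
  proof (intro exI[of _ "\<lambda>i x. Df i x + Dg i x"] conjI allI ballI)
    show "(\<lambda>x. Df i x + Dg i x) \<in> Fam" if "i \<in> Basis" for i using Df Dg that by (auto intro: Fam.add)
    fix x
    show "((\<lambda>x. f x + g x) has_derivative (\<lambda>v. \<Sum>i\<in>Basis. (v \<bullet> i) * (Df i x + Dg i x))) (at x)"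
      using has_derivative_add[OF Df(2)[rule_format, of x] Dg(2)[rule_format, of x]]
      by (simp add: distrib_left sum.distrib)
  qed
next
  case (mul f g)
  then obtain Df Dg where Df: "\<forall>i\<in>Basis. Df i \<in> Fam" "\<forall>x. (f has_derivative (\<lambda>v. \<Sum>i\<in>Basis. (v \<bullet> i) * Df i x)) (at x)"
    and Dg: "\<forall>i\<in>Basis. Dg i \<in> Fam" "\<forall>x. (g has_derivative (\<lambda>v. \<Sum>i\<in>Basis. (v \<bullet> i) * Dg i x)) (at x)"
    by blast
  show ?case
  proof (intro exI[of _ "\<lambda>i x. f x * Dg i x + Df i x * g x"] conjI allI ballI)
    show "(\<lambda>x. f x * Dg i x + Df i x * g x) \<in> Fam" if "i \<in> Basis" for i
      using Df Dg that mul.hyps by (auto intro!: Fam.add Fam.mul)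
    fix x
    show "((\<lambda>x. f x * g x) has_derivative (\<lambda>v. \<Sum>i\<in>Basis. (v \<bullet> i) * (f x * Dg i x + Df i x * g x))) (at x)"
      using has_derivative_mult[OF Df(2)[rule_format, of x] Dg(2)[rule_format, of x]]
      by (simp add: distrib_left sum.distrib sum_distrib_left sum_distrib_right mult_ac)
  qed
next
  case (bmp P)
  show ?case
  proof (intro exI[of _ "\<lambda>i x. hP (dP P) (1/4 - x \<bullet> x) * ((-2) * (x \<bullet> i))"] conjI allI ballI)
    show "(\<lambda>x::'a. hP (dP P) (1/4 - x \<bullet> x) * ((-2) * (x \<bullet> i))) \<in> Fam" for i
      by (intro Fam.mul Fam.bmp Fam.cst Fam.crd)
    fix x :: 'a
    have "(\<lambda>v. hP (dP P) (1/4 - x \<bullet> x) * (- (2 * (x \<bullet> v)))) =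
          (\<lambda>v. \<Sum>i\<in>Basis. (v \<bullet> i) * (hP (dP P) (1/4 - x \<bullet> x) * ((-2) * (x \<bullet> i))))"
    proof (rule ext)
      fix v :: 'a
      have e: "x \<bullet> v = (\<Sum>i\<in>Basis. (v \<bullet> i) * (x \<bullet> i))"
        by (subst euclidean_inner) (simp add: mult.commute)
      show "hP (dP P) (1/4 - x \<bullet> x) * (- (2 * (x \<bullet> v))) =
          (\<Sum>i\<in>Basis. (v \<bullet> i) * (hP (dP P) (1/4 - x \<bullet> x) * ((-2) * (x \<bullet> i))))"
        unfolding e by (simp add: sum_distrib_left sum_distrib_right sum_negf mult_ac)
    qed
    then show "((\<lambda>x. hP P (1/4 - x \<bullet> x)) has_derivative
       (\<lambda>v. \<Sum>i\<in>Basis. (v \<bullet> i) * (hP (dP P) (1/4 - x \<bullet> x) * ((-2) * (x \<bullet> i))))) (at x)"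
      using bump_deriv[of P x] by simp
  qed
qed

lemma bump_smooth: "smooth_fun (\<lambda>x::'a::euclidean_space. hP P (1/4 - x \<bullet> x))"
  unfolding smooth_fun_def
  by (intro exI[of _ Fam] conjI Fam.bmp ballI Fam_deriv)

definition bphi :: "'a::euclidean_space \<Rightarrow> real" where "bphi x = hP 1 (1/4 - x \<bullet> x)"
definition bG :: "'a::euclidean_space \<Rightarrow> 'a" where "bG x = (hP (dP 1) (1/4 - x \<bullet> x) * (-2)) *\<^sub>R x"

lemma bump_test: "test_fun (bphi :: 'a::euclidean_space \<Rightarrow> real) bG"
  unfolding test_fun_def
proof (intro conjI allI)
  show "smooth_fun (bphi :: 'a \<Rightarrow> real)" unfolding bphi_def[abs_def] by (rule bump_smooth)
  fix x :: 'a
  show "(bphi has_derivative (\<lambda>v. bG x \<bullet> v)) (at x)"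
    using bump_deriv[of 1 x] unfolding bphi_def[abs_def] bG_def by (simp add: mult_ac)
next
  show "\<exists>K. compact K \<and> K \<subseteq> (unit_ball :: 'a set) \<and> (\<forall>x. x \<notin> K \<longrightarrow> bphi x = 0)"
  proof (intro exI[of _ "cball 0 (1/2)"] conjI allI impI)
    fix x :: 'a assume "x \<notin> cball 0 (1/2)"
    then have "norm x > 1/2" by simp
    then have "norm x * norm x > 1/2 * (1/2)" by (intro mult_strict_mono) auto
    then have "x \<bullet> x > 1/4" by (simp add: norm_eq_sqrt_inner)
    then show "bphi x = 0" by (simp add: bphi_def hP_def)
  qed auto
qed

lemma bphi_pos: "norm (x::'a::euclidean_space) < 1/2 \<Longrightarrow> bphi x > 0"
proof -
  assume "norm x < 1/2"
  then have "norm x * norm x < 1/2 * (1/2)"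
    by (intro mult_strict_mono') auto
  then have "x \<bullet> x < 1/4" by (simp add: norm_eq_sqrt_inner)
  then show ?thesis by (simp add: bphi_def hP_def)
qed

lemma bphi_cont: "continuous_on UNIV (bphi :: 'a::euclidean_space \<Rightarrow> real)"
  unfolding bphi_def[abs_def]
  by (intro continuous_at_imp_continuous_on ballI continuous_intros isCont_o2[OF _ hP_cont])

lemma bG_cont: "continuous_on UNIV (bG :: 'a::euclidean_space \<Rightarrow> 'a)"
  unfolding bG_def[abs_def]
  by (intro continuous_at_imp_continuous_on ballI continuous_intros isCont_o2[OF _ hP_cont])



lemma cont_set_integrable_ball:
  fixes f :: "'a::euclidean_space \<Rightarrow> real"
  assumes "continuous_on UNIV f"
  shows "set_integrable lborel unit_ball f"
proof -
  have "set_integrable lborel (cball (0::'a) 1) f"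
    unfolding set_integrable_def
    by (rule borel_integrable_compact) (auto intro: continuous_on_subset[OF assms])
  then show ?thesis by (rule set_integrable_subset) auto
qed

lemma exists_H10: "\<exists>(u::'a::euclidean_space \<Rightarrow> real) g. H10 u g \<and> H10_nonzero u"
proof (intro exI conjI)
  have c1: "continuous_on UNIV (bphi :: 'a \<Rightarrow> real)" by (rule bphi_cont)
  have c2: "continuous_on UNIV (bG :: 'a \<Rightarrow> 'a)" by (rule bG_cont)
  show "H10 (bphi :: 'a \<Rightarrow> real) bG"
    unfolding H10_def
  proof (intro conjI exI[of _ "\<lambda>n. bphi"] exI[of _ "\<lambda>n. bG"] allI)
    show "(bphi::'a\<Rightarrow>real) \<in> borel_measurable lborel" using borel_measurable_continuous_onI[OF c1] by simp
    show "(bG::'a\<Rightarrow>'a) \<in> borel_measurable lborel" using borel_measurable_continuous_onI[OF c2] by simp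
    show "set_integrable lborel unit_ball (\<lambda>x. (bphi (x::'a))\<^sup>2)"
      by (rule cont_set_integrable_ball) (intro continuous_intros c1)
    show "set_integrable lborel unit_ball (\<lambda>x. (norm (bG (x::'a)))\<^sup>2)"
      by (rule cont_set_integrable_ball) (intro continuous_intros c2)
  qed (auto intro: bump_test)
  show "H10_nonzero (bphi :: 'a \<Rightarrow> real)"
    unfolding H10_nonzero_def
  proof
    assume "AE x in lborel. (x::'a) \<in> unit_ball \<longrightarrow> bphi x = 0"
    moreover have "AE x in lborel. (x \<in> unit_ball \<longrightarrow> bphi x = 0) \<longrightarrow> x \<notin> ball (0::'a) (1/2)"
    proof (rule AE_I2, intro impI)
      fix x :: 'a assume "x \<in> unit_ball \<longrightarrow> bphi x = 0"
      then show "x \<notin> ball 0 (1/2)" using bphi_pos[of x] by auto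
    qed
    ultimately have "AE x in lborel. x \<notin> ball (0::'a) (1/2)" by (rule AE_mp)
    then have "emeasure lborel (ball (0::'a) (1/2)) = 0"
    proof -
      have eqb: "{x\<in>space lborel. \<not> (x \<notin> ball (0::'a) (1/2))} = ball (0::'a) (1/2)" by auto
      have mb: "ball (0::'a) (1/2) \<in> sets lborel" by simp
      show ?thesis using AE_iff_measurable[OF mb eqb] \<open>AE x in lborel. x \<notin> ball (0::'a) (1/2)\<close> by blast
    qed
    moreover have "measure lborel (ball (0::'a) (1/2)) > 0" using content_ball_pos[of "1/2" "0::'a"] by simp
    ultimately show False by (simp add: measure_def)
  qed
qed



definition Qw :: "(real \<Rightarrow> real) \<Rightarrow> real \<Rightarrow> ('a::euclidean_space \<Rightarrow> real) \<Rightarrow> ('a \<Rightarrow> 'a) \<Rightarrow> real" where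
  "Qw W p u g = (LINT x : unit_ball | lborel. (norm (g x))\<^sup>2) /
        (LINT x : unit_ball | lborel. W (norm x) * \<bar>u x\<bar> powr (p + 1)) powr (2 / (p + 1))"

lemma Sweight_eq: "Sweight W p TYPE('a::euclidean_space) = Inf {Qw W p u g | (u::'a \<Rightarrow> real) g. H10 u g \<and> H10_nonzero u}"
  unfolding Sweight_def Qw_def ..

lemma Qw_nonneg: assumes "\<And>x. 0 \<le> W (norm x)" shows "0 \<le> Qw W p u g"
  unfolding Qw_def set_lebesgue_integral_def
  by (intro divide_nonneg_nonneg integral_nonneg_AE AE_I2) (auto simp: assms)

lemma Sweight_le:
  assumes "\<And>x. 0 \<le> W (norm x)" and "H10 u g" "H10_nonzero u"
  shows "Sweight W p TYPE('a::euclidean_space) \<le> Qw W p (u::'a \<Rightarrow> real) g"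
  unfolding Sweight_eq
  by (rule cInf_lower) (use assms Qw_nonneg[of W, OF assms(1)] in \<open>auto intro!: bdd_belowI[of _ 0]\<close>)

lemma transfer_integral:
  fixes F :: "'a::euclidean_space \<Rightarrow> real"
  assumes "c > 0"
  shows "lebesgue_integral lborel (\<lambda>x. F (t + c *\<^sub>R x)) = lebesgue_integral lborel F / c ^ DIM('a)"
  using integral_affine_eucl[of c F t] assms by simp



lemma key:
  fixes u :: "'a::euclidean_space \<Rightarrow> real" and g :: "'a \<Rightarrow> 'a" and W :: "real \<Rightarrow> real" and xc :: 'a
  assumes H: "H10 u g" and nz: "H10_nonzero u" and l: "l > 0"
    and xc: "norm xc + 1/l \<le> 1" and m: "m > 0" and p: "p > 0"
    and Wm: "(\<lambda>x::'a. W (norm x)) \<in> borel_measurable lborel"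
    and Wnn: "\<And>x::'a. 0 \<le> W (norm x)"
    and Wb: "\<And>x. x \<in> ball xc (1/l) \<Longrightarrow> m \<le> W (norm x) \<and> W (norm x) \<le> 1"
  shows "Sweight W p TYPE('a) \<le> l powr (2 - real DIM('a) + 2 * real DIM('a) / (p + 1)) * m powr (-2/(p+1)) * Qw (\<lambda>_. 1) p u g"
proof -
  define t where "t = - (l *\<^sub>R xc)"
  define N where "N = DIM('a)"
  have inA: "x \<in> ball xc (1/l)" if "t + l *\<^sub>R x \<in> unit_ball" for x
  proof -
    have "norm (l *\<^sub>R (x - xc)) < 1" using that by (simp add: t_def algebra_simps)
    then have "l * norm (x - xc) < 1" using l by simp
    then have "norm (x - xc) < 1/l" using l by (simp add: field_simps)
    then show ?thesis by (simp add: dist_norm norm_minus_commute)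
  qed
  have ballB: "x \<in> unit_ball" if "x \<in> ball xc (1/l)" for x
  proof -
    have "norm x \<le> norm xc + norm (x - xc)" by (metis add_diff_cancel_left' norm_triangle_ineq2 diff_add_cancel norm_triangle_ineq)
    also have "norm (x - xc) < 1/l" using that by (simp add: dist_norm norm_minus_commute)
    finally show ?thesis using xc by simp
  qed
  have AB: "x \<in> unit_ball" if "t + l *\<^sub>R x \<in> unit_ball" for x using inA ballB that by blast
  have um[measurable]: "u \<in> borel_measurable borel" and gm[measurable]: "g \<in> borel_measurable borel"
    using H unfolding H10_def by auto
  have Wm'[measurable]: "(\<lambda>x::'a. W (norm x)) \<in> borel_measurable borel" using Wm by simp
  define u' where "u' x = (if t + l *\<^sub>R x \<in> unit_ball then u (t + l *\<^sub>R x) else 0)" for x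
  define g' where "g' x = (if t + l *\<^sub>R x \<in> unit_ball then l *\<^sub>R g (t + l *\<^sub>R x) else 0)" for x
  have Am[measurable]: "(\<lambda>x. t + l *\<^sub>R x) \<in> borel_measurable (borel :: 'a measure)"
    by (intro borel_measurable_continuous_onI continuous_intros)
  have pr[measurable]: "Measurable.pred borel (\<lambda>x. t + l *\<^sub>R x \<in> (unit_ball::'a set))"
    by (rule pred_sets2[OF _ Am]) simp
  have u'm[measurable]: "u' \<in> borel_measurable borel" unfolding u'_def[abs_def] by measurable
  have g'm[measurable]: "g' \<in> borel_measurable borel" unfolding g'_def[abs_def] by measurable
  have TI: "(\<integral>x. F (t + l *\<^sub>R x) \<partial>lborel) = (\<integral>x. F x \<partial>lborel) / l ^ N" for F :: "'a \<Rightarrow> real"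
    using integral_affine_eucl[where c=l and t=t and f=F] l by (simp add: N_def)
  have TII: "integrable lborel (\<lambda>x. F (t + l *\<^sub>R x)) \<longleftrightarrow> integrable lborel F" for F :: "'a \<Rightarrow> real"
    using integrable_affine_eucl_iff[where c=l and t=t and f=F] l by simp
  have pw: "indicator unit_ball x * (if t + l *\<^sub>R x \<in> unit_ball then F (t + l *\<^sub>R x) else 0)
      = indicator unit_ball (t + l *\<^sub>R x) * F (t + l *\<^sub>R x)" for F :: "'a \<Rightarrow> real" and x
    using AB[of x] by (auto simp: indicator_def)
  obtain \<phi> G where tf: "\<And>n. test_fun (\<phi> n) (G n)"
    and c1: "(\<lambda>n. LINT x : unit_ball | lborel. (\<phi> n x - u x)\<^sup>2) \<longlonglongrightarrow> 0"
    and c2: "(\<lambda>n. LINT x : unit_ball | lborel. (norm (G n x - g x))\<^sup>2) \<longlonglongrightarrow> 0"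
    using H unfolding H10_def by blast
  have sq: "set_integrable lborel unit_ball (\<lambda>x. (u x)\<^sup>2)"
    and sg: "set_integrable lborel unit_ball (\<lambda>x. (norm (g x))\<^sup>2)"
    using H unfolding H10_def by auto
  have supp: "\<phi> n y = 0 \<and> G n y = 0" if "y \<notin> unit_ball" for n y
  proof -
    obtain K where "K \<subseteq> unit_ball" "\<forall>x. x \<notin> K \<longrightarrow> \<phi> n x = 0 \<and> G n x = 0"
      using test_fun_support[OF tf[of n]] by blast
    then show ?thesis using that by blast
  qed
  have l0: "l \<noteq> 0" using l by simp
  have H': "H10 u' g'"
    unfolding H10_def
  proof (intro conjI exI[of _ "\<lambda>n x. \<phi> n (t + l *\<^sub>R x)"] exI[of _ "\<lambda>n x. l *\<^sub>R G n (t + l *\<^sub>R x)"] allI)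
    show "u' \<in> borel_measurable lborel" "g' \<in> borel_measurable lborel" using u'm g'm by simp_all
    have "(\<lambda>x. indicator unit_ball x *\<^sub>R (u' x)\<^sup>2) = (\<lambda>x. (\<lambda>y. indicator unit_ball y * (u y)\<^sup>2) (t + l *\<^sub>R x))"
      using AB by (auto simp: u'_def indicator_def)
    then show "set_integrable lborel unit_ball (\<lambda>x. (u' x)\<^sup>2)"
      unfolding set_integrable_def using sq[unfolded set_integrable_def] TII[of "\<lambda>y. indicator unit_ball y * (u y)\<^sup>2"] by simp
    have "(\<lambda>x. indicator unit_ball x *\<^sub>R (norm (g' x))\<^sup>2) = (\<lambda>x. (\<lambda>y. l\<^sup>2 * (indicator unit_ball y * (norm (g y))\<^sup>2)) (t + l *\<^sub>R x))"
      using AB l by (auto simp: g'_def indicator_def power_mult_distrib)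
    moreover have "integrable lborel (\<lambda>y. l\<^sup>2 * (indicator unit_ball y * (norm (g y))\<^sup>2))"
      using sg[unfolded set_integrable_def] by simp
    ultimately show "set_integrable lborel unit_ball (\<lambda>x. (norm (g' x))\<^sup>2)"
      unfolding set_integrable_def using TII[of "\<lambda>y. l\<^sup>2 * (indicator unit_ball y * (norm (g y))\<^sup>2)"] by simp
    fix n
    show "test_fun (\<lambda>x. \<phi> n (t + l *\<^sub>R x)) (\<lambda>x. l *\<^sub>R G n (t + l *\<^sub>R x))"
      by (rule test_fun_affine[OF tf l0 AB])
  next
    have "(LINT x : unit_ball | lborel. (\<phi> n (t + l *\<^sub>R x) - u' x)\<^sup>2) = (LINT x : unit_ball | lborel. (\<phi> n x - u x)\<^sup>2) / l ^ N" for n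
    proof -
      have "(\<lambda>x. indicator unit_ball x *\<^sub>R (\<phi> n (t + l *\<^sub>R x) - u' x)\<^sup>2) = (\<lambda>x. (\<lambda>y. indicator unit_ball y * (\<phi> n y - u y)\<^sup>2) (t + l *\<^sub>R x))"
        using AB supp by (auto simp: u'_def indicator_def)
      then show ?thesis unfolding set_lebesgue_integral_def using TI[of "\<lambda>y. indicator unit_ball y * (\<phi> n y - u y)\<^sup>2"] by simp
    qed
    then show "(\<lambda>n. LINT x : unit_ball | lborel. (\<phi> n (t + l *\<^sub>R x) - u' x)\<^sup>2) \<longlonglongrightarrow> 0"
      using tendsto_divide_zero[OF c1, of "l ^ N"] by simp
  next
    have "(LINT x : unit_ball | lborel. (norm (l *\<^sub>R G n (t + l *\<^sub>R x) - g' x))\<^sup>2) = l\<^sup>2 * (LINT x : unit_ball | lborel. (norm (G n x - g x))\<^sup>2) / l ^ N" for n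
    proof -
      have "(\<lambda>x. indicator unit_ball x *\<^sub>R (norm (l *\<^sub>R G n (t + l *\<^sub>R x) - g' x))\<^sup>2) = (\<lambda>x. (\<lambda>y. l\<^sup>2 * (indicator unit_ball y * (norm (G n y - g y))\<^sup>2)) (t + l *\<^sub>R x))"
        using AB supp l by (auto simp: g'_def indicator_def power_mult_distrib simp flip: scaleR_diff_right)
      then show ?thesis unfolding set_lebesgue_integral_def using TI[of "\<lambda>y. l\<^sup>2 * (indicator unit_ball y * (norm (G n y - g y))\<^sup>2)"] by simp
    qed
    then show "(\<lambda>n. LINT x : unit_ball | lborel. (norm (l *\<^sub>R G n (t + l *\<^sub>R x) - g' x))\<^sup>2) \<longlonglongrightarrow> 0"
      using tendsto_divide_zero[OF tendsto_mult_right_zero[OF c2, of "l\<^sup>2"], of "l ^ N"] by simp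
  qed
  have nz': "H10_nonzero u'"
    unfolding H10_nonzero_def
  proof
    assume a: "AE x in lborel. x \<in> unit_ball \<longrightarrow> u' x = 0"
    have "AE x in lborel. (x \<in> unit_ball \<longrightarrow> u' x = 0) \<longrightarrow> (t + l *\<^sub>R x \<in> unit_ball \<longrightarrow> u (t + l *\<^sub>R x) = 0)"
      by (rule AE_I2) (use AB in \<open>auto simp: u'_def\<close>)
    from AE_mp[OF a this] have ae1: "AE x in lborel. t + l *\<^sub>R x \<in> unit_ball \<longrightarrow> u (t + l *\<^sub>R x) = 0" .
    have ae2: "AE y in distr lborel borel (\<lambda>x. t + l *\<^sub>R x). y \<in> unit_ball \<longrightarrow> u y = 0"
      by (subst AE_distr_iff) (use ae1 in auto)
    have "AE y in density (distr lborel borel (\<lambda>x. t + l *\<^sub>R x)) (\<lambda>_. \<bar>l\<bar> ^ DIM('a)). y \<in> unit_ball \<longrightarrow> u y = 0"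
      by (subst AE_density) (auto intro: AE_mp[OF ae2])
    then have "AE y in lborel. y \<in> unit_ball \<longrightarrow> u y = 0"
      by (subst lborel_affine[OF l0, of t])
    then show False using nz unfolding H10_nonzero_def by blast
  qed
  have S1: "Sweight W p TYPE('a) \<le> Qw W p u' g'" by (rule Sweight_le[of W, OF Wnn H' nz'])
  define q where "q = p + 1"
  define r where "r = 2 / (p + 1)"
  have q0: "q > 0" and r0: "r > 0" using p by (auto simp: q_def r_def)
  define F where "F y = indicator unit_ball y * \<bar>u y\<bar> powr q" for y
  define I where "I = (LINT x : unit_ball | lborel. (\<lambda>_. 1::real) (norm x) * \<bar>u x\<bar> powr (p + 1))"
  define J where "J = (LINT x : unit_ball | lborel. (norm (g x))\<^sup>2)"
  define Ja where "Ja = (LINT x : unit_ball | lborel. (norm (g' x))\<^sup>2)"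
  define Ia where "Ia = (LINT x : unit_ball | lborel. W (norm x) * \<bar>u' x\<bar> powr (p + 1))"
  have Qa: "Qw W p u' g' = Ja / Ia powr r" unfolding Qw_def Ja_def Ia_def r_def ..
  have Q0: "Qw (\<lambda>_. 1) p u g = J / I powr r" unfolding Qw_def J_def I_def r_def ..
  have IF: "I = (\<integral>x. F x \<partial>lborel)" unfolding I_def F_def q_def set_lebesgue_integral_def by simp
  have J0: "J \<ge> 0" unfolding J_def set_lebesgue_integral_def by (intro integral_nonneg_AE AE_I2) auto
  have I0: "I \<ge> 0" unfolding IF F_def by (intro integral_nonneg_AE AE_I2) auto
  have JaJ: "Ja = l\<^sup>2 * J / l ^ N"
  proof -
    have "(\<lambda>x. indicator unit_ball x *\<^sub>R (norm (g' x))\<^sup>2) = (\<lambda>x. (\<lambda>y. l\<^sup>2 * (indicator unit_ball y * (norm (g y))\<^sup>2)) (t + l *\<^sub>R x))"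
      using AB l by (auto simp: g'_def indicator_def power_mult_distrib)
    then show ?thesis unfolding Ja_def J_def set_lebesgue_integral_def
      using TI[of "\<lambda>y. l\<^sup>2 * (indicator unit_ball y * (norm (g y))\<^sup>2)"] by simp
  qed
  have pwu: "indicator unit_ball x * \<bar>u' x\<bar> powr q = F (t + l *\<^sub>R x)" for x
    using AB[of x] q0 by (auto simp: u'_def F_def indicator_def)
  have Wle: "indicator unit_ball x * (W (norm x) * \<bar>u' x\<bar> powr q) \<le> indicator unit_ball x * \<bar>u' x\<bar> powr q" for x
  proof (cases "t + l *\<^sub>R x \<in> unit_ball")
    case True
    then have "W (norm x) \<le> 1" using Wb inA by blast
    then show ?thesis using Wnn[of x] by (auto simp: indicator_def intro: mult_left_le_one_le)
  qed (use q0 in \<open>auto simp: u'_def\<close>)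
  have Wge: "m * (indicator unit_ball x * \<bar>u' x\<bar> powr q) \<le> indicator unit_ball x * (W (norm x) * \<bar>u' x\<bar> powr q)" for x
  proof (cases "t + l *\<^sub>R x \<in> unit_ball")
    case True
    then have "m \<le> W (norm x)" using Wb inA by blast
    then show ?thesis by (auto simp: indicator_def intro: mult_right_mono)
  qed (use q0 in \<open>auto simp: u'_def\<close>)
  have Bm[measurable]: "Measurable.pred borel (\<lambda>x::'a. x \<in> unit_ball)" unfolding pred_def by simp
  have WUm0: "(\<lambda>x. indicator unit_ball x * (W (norm x) * \<bar>u' x\<bar> powr q)) \<in> borel_measurable borel"
    by measurable
  then have WUm: "(\<lambda>x. indicator unit_ball x * (W (norm x) * \<bar>u' x\<bar> powr q)) \<in> borel_measurable lborel"
    by simp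
  have IaW: "Ia = (\<integral>x. indicator unit_ball x * (W (norm x) * \<bar>u' x\<bar> powr q) \<partial>lborel)"
    unfolding Ia_def set_lebesgue_integral_def q_def by simp
  have Sq: "Qw W p u' g' \<le> l powr (2 - real DIM('a) + 2 * real DIM('a) / (p + 1)) * m powr (-2/(p+1)) * Qw (\<lambda>_. 1) p u g"
  proof (cases "integrable lborel F")
    case True
    have iu': "integrable lborel (\<lambda>x. indicator unit_ball x * \<bar>u' x\<bar> powr q)"
      unfolding pwu using TII[of F] True by simp
    have iW: "integrable lborel (\<lambda>x. indicator unit_ball x * (W (norm x) * \<bar>u' x\<bar> powr q))"
      by (rule Bochner_Integration.integrable_bound[OF iu' WUm]) (use Wle Wnn in \<open>auto intro!: AE_I2\<close>)
    have "(\<integral>x. m * (indicator unit_ball x * \<bar>u' x\<bar> powr q) \<partial>lborel) \<le> Ia"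
      unfolding IaW by (rule integral_mono[OF _ iW Wge]) (use iu' in simp)
    moreover have "(\<integral>x. indicator unit_ball x * \<bar>u' x\<bar> powr q \<partial>lborel) = I / l ^ N"
      unfolding pwu IF by (rule TI)
    ultimately have IaI: "m * (I / l ^ N) \<le> Ia" by simp
    have Ipos: "I > 0"
    proof (rule ccontr)
      assume "\<not> I > 0"
      then have "I = 0" using I0 by simp
      then have "AE x in lborel. F x = 0"
        using integral_nonneg_eq_0_iff_AE[OF True] unfolding IF F_def by (auto intro!: AE_I2)
      then have "AE x in lborel. x \<in> unit_ball \<longrightarrow> u x = 0"
        by (rule AE_mp) (use q0 in \<open>auto intro!: AE_I2 simp: F_def\<close>)
      then show False using nz unfolding H10_nonzero_def by blast
    qed
    have lN: "l ^ N > 0" using l by simp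
    have mI: "m * (I / l ^ N) > 0" using m Ipos lN by simp
    have "Ja / Ia powr r \<le> Ja / (m * (I / l ^ N)) powr r"
      using JaJ J0 l mI IaI r0 by (intro divide_left_mono powr_mono2 mult_pos_pos) auto
    also have "\<dots> = l powr (2 - real N + real N * r) * m powr (- r) * (J / I powr r)"
    proof -
      have lNp: "l ^ N = l powr real N" using l by (simp add: powr_realpow)
      have e1: "(m * (I / l ^ N)) powr r = m powr r * I powr r / l powr (real N * r)"
        using m Ipos l unfolding lNp by (simp add: powr_mult powr_divide powr_powr)
      have e2: "l powr (2 - real N + real N * r) = l\<^sup>2 / l ^ N * l powr (real N * r)"
      proof -
        have "l powr (2 - real N + real N * r) = l powr ((2 + real N * r) - real N)" by (simp add: algebra_simps)
        also have "\<dots> = l powr 2 * l powr (real N * r) / l powr real N" by (simp add: powr_diff powr_add)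
        also have "\<dots> = l\<^sup>2 / l ^ N * l powr (real N * r)" using l by (simp add: lNp)
        finally show ?thesis .
      qed
      have pos: "m powr r > 0" "I powr r > 0" "l powr (real N * r) > 0" using m Ipos l by auto
      show ?thesis unfolding e1 e2 JaJ using pos lN by (simp add: powr_minus_divide field_simps)
    qed
    finally show ?thesis unfolding Qa Q0 N_def r_def by (simp add: algebra_simps)
  next
    case False
    have "\<not> integrable lborel (\<lambda>x. indicator unit_ball x * (W (norm x) * \<bar>u' x\<bar> powr q))"
    proof
      assume iW: "integrable lborel (\<lambda>x. indicator unit_ball x * (W (norm x) * \<bar>u' x\<bar> powr q))"
      have "integrable lborel (\<lambda>x. indicator unit_ball x * \<bar>u' x\<bar> powr q)"
      proof (rule Bochner_Integration.integrable_bound[OF integrable_mult_right[OF iW, of "1/m"]])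
        show "AE x in lborel. norm (indicator unit_ball x * \<bar>u' x\<bar> powr q)
             \<le> norm (1 / m * (indicator unit_ball x * (W (norm x) * \<bar>u' x\<bar> powr q)))"
        proof (rule AE_I2)
          fix x
          have "m * (indicator unit_ball x * \<bar>u' x\<bar> powr q) \<le> indicator unit_ball x * (W (norm x) * \<bar>u' x\<bar> powr q)"
            by (rule Wge)
          then have "indicator unit_ball x * \<bar>u' x\<bar> powr q \<le> 1 / m * (indicator unit_ball x * (W (norm x) * \<bar>u' x\<bar> powr q))"
            using m by (simp add: field_simps)
          then show "norm (indicator unit_ball x * \<bar>u' x\<bar> powr q)
             \<le> norm (1 / m * (indicator unit_ball x * (W (norm x) * \<bar>u' x\<bar> powr q)))"
          proof -
            have "0 \<le> 1 / m * (indicator unit_ball x * (W (norm x) * \<bar>u' x\<bar> powr q))"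
              using m Wnn[of x] by simp
            moreover have "0 \<le> indicator unit_ball x * \<bar>u' x\<bar> powr q" by simp
            ultimately show ?thesis using \<open>indicator unit_ball x * \<bar>u' x\<bar> powr q \<le> _\<close> by (metis abs_of_nonneg real_norm_def)
          qed
        qed
      qed simp
      then show False unfolding pwu using TII[of F] False by simp
    qed
    then have "Ia = 0" unfolding IaW by (rule not_integrable_integral_eq)
    then have "Qw W p u' g' = 0" unfolding Qa using r0 by simp
    moreover have "Qw (\<lambda>_. 1) p u g \<ge> 0" by (rule Qw_nonneg) simp
    ultimately show ?thesis using m l by simp
  qed
  show ?thesis using S1 Sq by linarith
qed



lemma V_nonneg: "0 \<le> V R a r" unfolding V_def by auto

lemma V_meas: "(\<lambda>x::'a::euclidean_space. V R a (norm x)) \<in> borel_measurable lborel"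
proof -
  have "V R a \<in> borel_measurable borel" unfolding V_def[abs_def] by measurable
  then show ?thesis using borel_measurable_norm measurable_compose by (auto simp: comp_def)
qed

lemma bound_gen:
  fixes f :: "real \<Rightarrow> real"
  assumes ev: "\<forall>\<^sub>F \<alpha> in at_top. f \<alpha> \<le> ((1 + a / \<alpha>) powr \<alpha>) powr (- r) * Q"
  shows "Limsup at_top (\<lambda>\<alpha>. ereal (f \<alpha>)) \<le> ereal (exp (- a * r) * Q)"
proof -
  have "((\<lambda>\<alpha>. ((1 + a / \<alpha>) powr \<alpha>) powr (- r) * Q) \<longlongrightarrow> exp a powr (- r) * Q) at_top"
    by (intro tendsto_mult tendsto_const tendsto_powr tendsto_exp_limit_at_top) simp
  then have L: "((\<lambda>\<alpha>. ereal (((1 + a / \<alpha>) powr \<alpha>) powr (- r) * Q)) \<longlongrightarrow> ereal (exp (- a * r) * Q)) at_top"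
    by (simp add: exp_powr_real)
  have "Limsup at_top (\<lambda>\<alpha>. ereal (f \<alpha>)) \<le> Limsup at_top (\<lambda>\<alpha>. ereal (((1 + a / \<alpha>) powr \<alpha>) powr (- r) * Q))"
    by (rule Limsup_mono) (use ev in \<open>auto elim!: eventually_mono\<close>)
  also have "\<dots> = ereal (exp (- a * r) * Q)" by (rule lim_imp_Limsup[OF _ L]) simp
  finally show ?thesis .
qed

lemma Limsup_Inf:
  fixes L :: ereal
  assumes ne: "X \<noteq> {}" and bdd: "bdd_below X" and k: "k \<ge> 0"
    and le: "\<And>Q. Q \<in> X \<Longrightarrow> L \<le> ereal (k * Q)"
  shows "L \<le> ereal (k * Inf X)"
proof (rule ccontr)
  assume "\<not> L \<le> ereal (k * Inf X)"
  then have lt: "ereal (k * Inf X) < L" by simp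
  obtain z where z: "k * Inf X < z" "ereal z < L" using ereal_dense2[OF lt] by auto
  show False
  proof (cases "k = 0")
    case True
    obtain Q where "Q \<in> X" using ne by blast
    then have "L \<le> ereal 0" using le[of Q] True by simp
    then have "ereal z < ereal 0" by (rule order.strict_trans2[OF z(2)])
    then show False using z(1) True by simp
  next
    case False
    then have "Inf X < z / k" using z k by (simp add: field_simps)
    then obtain Q where Q: "Q \<in> X" "Q < z / k" using cInf_lessD[OF ne] by blast
    then have "k * Q < z" using k False by (simp add: field_simps)
    then have "ereal (k * Q) < ereal z" by simp
    moreover have "ereal z < ereal (k * Q)" by (rule order.strict_trans2[OF z(2) le[OF Q(1)]])
    ultimately show False by simp
  qed
qed



lemma boundA:
  fixes u :: "'a::euclidean_space \<Rightarrow> real"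
  assumes H: "H10 u g" and nz: "H10_nonzero u" and R: "0 < R" "R \<le> 1" and p: "p > 1"
    and E: "0 \<le> 2 - real DIM('a) + 2 * real DIM('a) / (p + 1)"
  shows "Limsup at_top (\<lambda>\<alpha>::real. ereal (S_alpha_R p \<alpha> R TYPE('a) *
              \<alpha> powr (real DIM('a) - 2 - 2 * real DIM('a) / (p + 1))))
         \<le> ereal (exp (4 / (R * (p + 1))) * Qw (\<lambda>_. 1) p u g)"
proof -
  define E where "E = 2 - real DIM('a) + 2 * real DIM('a) / (p + 1)"
  define r where "r = 2 / (p + 1)"
  define Q where "Q = Qw (\<lambda>_. 1) p u g"
  have Q0: "Q \<ge> 0" unfolding Q_def by (rule Qw_nonneg) simp
  have e0: "real DIM('a) - 2 - 2 * real DIM('a) / (p + 1) = - E" unfolding E_def by simp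
  have ex: "exp (4 / (R * (p + 1))) = exp (- (-2 / R) * r)" unfolding r_def using R p by (simp add: field_simps)
  have "\<forall>\<^sub>F \<alpha> in at_top. S_alpha_R p \<alpha> R TYPE('a) * \<alpha> powr (- E) \<le> ((1 + (-2/R) / \<alpha>) powr \<alpha>) powr (- r) * Q"
    using eventually_gt_at_top[of "max 2 (2/R)"]
  proof eventually_elim
    fix \<alpha> :: real assume "max 2 (2/R) < \<alpha>"
    then have a2: "2 < \<alpha>" and aR: "2/R < \<alpha>" by auto
    have a0: "\<alpha> > 0" using a2 by simp
    have aR': "2/\<alpha> < R" using aR R a0 by (simp add: field_simps)
    define l where "l = \<alpha> / 2"
    define m where "m = (1 + (-2/R) / \<alpha>) powr \<alpha>"
    have l0: "l > 0" using a0 by (simp add: l_def)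
    have b1: "(2/R) / \<alpha> < 1" using aR a0 R by (simp add: divide_less_eq mult.commute)
    have "1 + (-2/R) / \<alpha> = 1 - (2/R) / \<alpha>" by (simp add: diff_divide_distrib)
    then have base: "1 + (-2/R) / \<alpha> > 0" using b1 by linarith
    have m0: "m > 0" unfolding m_def by (subst powr_gt_zero) (use base in linarith)
    have Wb: "m \<le> V R \<alpha> (norm x) \<and> V R \<alpha> (norm x) \<le> 1" if "x \<in> ball (0::'a) (1/l)" for x
    proof -
      have nx: "norm x < 2/\<alpha>" using that by (simp add: l_def)
      then have nxR: "norm x < R" using aR' by simp
      have V: "V R \<alpha> (norm x) = (1 - norm x / R) powr \<alpha>"
        using R nxR by (auto simp: V_def)
      have lo: "1 + (-2/R) / \<alpha> \<le> 1 - norm x / R"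
        using nx R a0 by (simp add: field_simps)
      have up: "1 - norm x / R \<le> 1" using R by simp
      have "m \<le> (1 - norm x / R) powr \<alpha>" unfolding m_def
        by (rule powr_mono2) (use a0 base lo in auto)
      moreover have "(1 - norm x / R) powr \<alpha> \<le> 1"
        by (rule powr_le1) (use a0 up nxR R in auto)
      ultimately show ?thesis unfolding V by simp
    qed
    have S0: "S_alpha_R p \<alpha> R TYPE('a) \<le> l powr E * m powr (-2/(p+1)) * Q"
      unfolding S_alpha_R_def E_def Q_def
      by (rule key[where xc="0::'a", OF H nz l0 _ m0 _ V_meas V_nonneg Wb]) (use a2 p in \<open>auto simp: l_def\<close>)
    have mr: "(-2/(p+1)) = - r" unfolding r_def by simp
    have S: "S_alpha_R p \<alpha> R TYPE('a) \<le> l powr E * m powr (-r) * Q" using S0 unfolding mr .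
    have "S_alpha_R p \<alpha> R TYPE('a) * \<alpha> powr (- E) \<le> l powr E * m powr (-r) * Q * \<alpha> powr (- E)"
      by (rule mult_right_mono[OF S]) simp
    also have "\<dots> = (1 / 2 powr E) * (m powr (-r) * Q)"
    proof -
      have "l powr E * \<alpha> powr (- E) = 1 / 2 powr E"
        using a0 by (simp add: l_def powr_divide powr_minus field_simps)
      moreover have "l powr E * m powr (-r) * Q * \<alpha> powr (- E) = (l powr E * \<alpha> powr (- E)) * (m powr (-r) * Q)"
        by (simp only: mult_ac)
      ultimately show ?thesis by simp
    qed
    also have "\<dots> \<le> 1 * (m powr (-r) * Q)"
    proof (rule mult_right_mono)
      have "1 \<le> 2 powr E" using E unfolding E_def by (intro ge_one_powr_ge_zero) auto
      then show "1 / 2 powr E \<le> 1" by simp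
    qed (use Q0 in simp)
    finally show "S_alpha_R p \<alpha> R TYPE('a) * \<alpha> powr (- E) \<le> ((1 + (-2/R) / \<alpha>) powr \<alpha>) powr (- r) * Q"
      unfolding m_def by simp
  qed
  from bound_gen[OF this] show ?thesis unfolding e0 ex Q_def .
qed



lemma boundB:
  fixes u :: "'a::euclidean_space \<Rightarrow> real"
  assumes H: "H10 u g" and nz: "H10_nonzero u" and R: "0 \<le> R" "R < 1" and p: "p > 1"
    and E: "0 \<le> 2 - real DIM('a) + 2 * real DIM('a) / (p + 1)"
  shows "Limsup at_top (\<lambda>\<alpha>::real. ereal (S_alpha_R p \<alpha> R TYPE('a) *
              \<alpha> powr (real DIM('a) - 2 - 2 * real DIM('a) / (p + 1))))
         \<le> ereal (exp (4 / ((1 - R) * (p + 1))) * Qw (\<lambda>_. 1) p u g)"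
proof -
  define E where "E = 2 - real DIM('a) + 2 * real DIM('a) / (p + 1)"
  define r where "r = 2 / (p + 1)"
  define Q where "Q = Qw (\<lambda>_. 1) p u g"
  define R' where "R' = 1 - R"
  have R': "R' > 0" using R by (simp add: R'_def)
  obtain b :: 'a where b: "b \<in> Basis" using nonempty_Basis by blast
  have nb: "norm b = 1" using b by simp
  have Q0: "Q \<ge> 0" unfolding Q_def by (rule Qw_nonneg) simp
  have e0: "real DIM('a) - 2 - 2 * real DIM('a) / (p + 1) = - E" unfolding E_def by simp
  have ex: "exp (4 / ((1 - R) * (p + 1))) = exp (- (-2 / R') * r)" unfolding r_def R'_def using R p by (simp add: field_simps)
  have "\<forall>\<^sub>F \<alpha> in at_top. S_alpha_R p \<alpha> R TYPE('a) * \<alpha> powr (- E) \<le> ((1 + (-2/R') / \<alpha>) powr \<alpha>) powr (- r) * Q"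
    using eventually_gt_at_top[of "max 1 (2/R')"]
  proof eventually_elim
    fix \<alpha> :: real assume "max 1 (2/R') < \<alpha>"
    then have a1: "1 < \<alpha>" and aR: "2/R' < \<alpha>" by auto
    have a0: "\<alpha> > 0" using a1 by simp
    have b1: "(2/R') / \<alpha> < 1" using aR a0 R' by (simp add: divide_less_eq mult.commute)
    have aR': "2/\<alpha> < R'" using aR R' a0 by (simp add: field_simps)
    have "1 + (-2/R') / \<alpha> = 1 - (2/R') / \<alpha>" by (simp add: diff_divide_distrib)
    then have base: "1 + (-2/R') / \<alpha> > 0" using b1 by linarith
    define m where "m = (1 + (-2/R') / \<alpha>) powr \<alpha>"
    define xc where "xc = (1 - 1/\<alpha>) *\<^sub>R b"
    have m0: "m > 0" unfolding m_def by (subst powr_gt_zero) (use base in linarith)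
    have nxc: "norm xc = 1 - 1/\<alpha>" unfolding xc_def using nb a1 by simp
    have Wb: "m \<le> V R \<alpha> (norm x) \<and> V R \<alpha> (norm x) \<le> 1" if "x \<in> ball xc (1/\<alpha>)" for x
    proof -
      have d: "norm (x - xc) < 1/\<alpha>" using that by (simp add: dist_norm norm_minus_commute)
      have "norm x \<le> norm xc + norm (x - xc)" using norm_triangle_ineq[of xc "x - xc"] by simp
      then have nx1: "norm x < 1" using d nxc by simp
      have "norm xc \<le> norm x + norm (xc - x)" using norm_triangle_ineq[of x "xc - x"] by simp
      then have nx2: "1 - 2/\<alpha> < norm x" using d nxc by (simp add: norm_minus_commute)
      have nxR: "R < norm x" using nx2 aR' by (simp add: R'_def)
      have V: "V R \<alpha> (norm x) = (1 - (1 - norm x) / R') powr \<alpha>"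
        using R nxR by (auto simp: V_def R'_def)
      have "(1 - norm x) / R' \<le> (2/\<alpha>) / R'" using nx2 R' by (intro divide_right_mono) auto
      then have lo: "1 + (-2/R') / \<alpha> \<le> 1 - (1 - norm x) / R'" by (simp add: field_simps)
      have up: "1 - (1 - norm x) / R' \<le> 1" using R' nx1 by simp
      have "m \<le> (1 - (1 - norm x) / R') powr \<alpha>" unfolding m_def
        by (rule powr_mono2) (use a0 base lo in auto)
      moreover have "(1 - (1 - norm x) / R') powr \<alpha> \<le> 1"
        by (rule powr_le1) (use a0 up base lo in auto)
      ultimately show ?thesis unfolding V by simp
    qed
    have S0: "S_alpha_R p \<alpha> R TYPE('a) \<le> \<alpha> powr E * m powr (-2/(p+1)) * Q"
      unfolding S_alpha_R_def E_def Q_def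
      by (rule key[where xc=xc, OF H nz a0 _ m0 _ V_meas V_nonneg Wb]) (use p nxc in auto)
    have mr: "(-2/(p+1)) = - r" unfolding r_def by simp
    have S: "S_alpha_R p \<alpha> R TYPE('a) \<le> \<alpha> powr E * m powr (-r) * Q" using S0 unfolding mr .
    have "S_alpha_R p \<alpha> R TYPE('a) * \<alpha> powr (- E) \<le> \<alpha> powr E * m powr (-r) * Q * \<alpha> powr (- E)"
      by (rule mult_right_mono[OF S]) simp
    also have "\<dots> = (\<alpha> powr E * \<alpha> powr (- E)) * (m powr (-r) * Q)"
      by (simp only: mult_ac)
    also have "\<alpha> powr E * \<alpha> powr (- E) = 1"
      using a0 by (simp add: powr_minus field_simps)
    finally show "S_alpha_R p \<alpha> R TYPE('a) * \<alpha> powr (- E) \<le> ((1 + (-2/R') / \<alpha>) powr \<alpha>) powr (- r) * Q"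
      unfolding m_def by simp
  qed
  from bound_gen[OF this] show ?thesis unfolding e0 ex Q_def .
qed



lemma E_nonneg:
  assumes "admissible_p N p"
  shows "0 \<le> 2 - real N + 2 * real N / (p + 1)"
proof -
  have p: "p > 1" using assms by (simp add: admissible_p_def)
  have key: "0 \<le> 2 * p + 2 - real N * p + real N"
  proof (cases "N \<ge> 3")
    case True
    then have "p < (real N + 2) / (real N - 2)" using assms by (simp add: admissible_p_def)
    moreover have "real N - 2 > 0" using True by simp
    ultimately have "p * (real N - 2) < real N + 2" by (simp add: field_simps)
    then show ?thesis by (simp add: algebra_simps)
  next
    case False
    then have "real N \<le> 2" by simp
    then have "real N * p \<le> 2 * p" using p by (intro mult_right_mono) auto
    then show ?thesis by simp
  qed
  have "2 - real N + 2 * real N / (p + 1) = (2 * p + 2 - real N * p + real N) / (p + 1)"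
    using p by (simp add: field_simps)
  then show ?thesis using key p by simp
qed

theorem mainTheorem6:
  fixes p R :: real
  assumes "admissible_p DIM('a::euclidean_space) p"
    and "0 \<le> R" and "R \<le> 1"
  shows "Limsup at_top (\<lambda>\<alpha>::real. ereal (S_alpha_R p \<alpha> R TYPE('a) *
              \<alpha> powr (real DIM('a) - 2 - 2 * real DIM('a) / (p + 1))))
         \<le> min (if R = 0 then \<infinity> else ereal (exp (4 / (R * (p + 1)))))
               (if R = 1 then \<infinity> else ereal (exp (4 / ((1 - R) * (p + 1)))))
           * ereal (S_const p TYPE('a))
       \<and> min (if R = 0 then \<infinity> else ereal (exp (4 / (R * (p + 1)))))
               (if R = 1 then \<infinity> else ereal (exp (4 / ((1 - R) * (p + 1)))))
           * ereal (S_const p TYPE('a))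
         \<le> ereal (exp (8 / (p + 1)) * S_const p TYPE('a))"
proof -
  have p: "p > 1" using assms(1) by (simp add: admissible_p_def)
  have E: "0 \<le> 2 - real DIM('a) + 2 * real DIM('a) / (p + 1)" by (rule E_nonneg[OF assms(1)])
  define X where "X = {Qw (\<lambda>_. 1) p u g | (u::'a \<Rightarrow> real) g. H10 u g \<and> H10_nonzero u}"
  define S where "S = S_const p TYPE('a)"
  have SX: "S = Inf X" unfolding S_def X_def S_const_def Sweight_eq ..
  have ne: "X \<noteq> {}" unfolding X_def using exists_H10 by blast
  have Xnn: "\<And>Q. Q \<in> X \<Longrightarrow> 0 \<le> Q" unfolding X_def using Qw_nonneg[of "\<lambda>_. 1"] by auto
  have bdd: "bdd_below X" by (rule bdd_belowI[of _ 0]) (rule Xnn)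
  have S0: "S \<ge> 0" unfolding SX by (rule cInf_greatest[OF ne Xnn])
  define L where "L = Limsup at_top (\<lambda>\<alpha>::real. ereal (S_alpha_R p \<alpha> R TYPE('a) *
              \<alpha> powr (real DIM('a) - 2 - 2 * real DIM('a) / (p + 1))))"
  define a where "a = exp (4 / (R * (p + 1)))"
  define b where "b = exp (4 / ((1 - R) * (p + 1)))"
  have LA: "L \<le> ereal (a * S)" if R0: "R \<noteq> 0"
    unfolding SX
  proof (rule Limsup_Inf[OF ne bdd])
    show "0 \<le> a" by (simp add: a_def)
    fix Q assume "Q \<in> X"
    then obtain u g where ug: "H10 (u::'a \<Rightarrow> real) g" "H10_nonzero u" "Q = Qw (\<lambda>_. 1) p u g"
      unfolding X_def by blast
    show "L \<le> ereal (a * Q)" unfolding L_def a_def ug(3)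
      by (rule boundA[OF ug(1,2) _ assms(3) p E]) (use assms(2) R0 in auto)
  qed
  have LB: "L \<le> ereal (b * S)" if R1: "R \<noteq> 1"
    unfolding SX
  proof (rule Limsup_Inf[OF ne bdd])
    show "0 \<le> b" by (simp add: b_def)
    fix Q assume "Q \<in> X"
    then obtain u g where ug: "H10 (u::'a \<Rightarrow> real) g" "H10_nonzero u" "Q = Qw (\<lambda>_. 1) p u g"
      unfolding X_def by blast
    show "L \<le> ereal (b * Q)" unfolding L_def b_def ug(3)
      by (rule boundB[OF ug(1,2) assms(2) _ p E]) (use assms(3) R1 in auto)
  qed
  define M where "M = min (if R = 0 then \<infinity> else ereal a) (if R = 1 then \<infinity> else ereal b)"
  have c8: "exp (8 / (p + 1)) = exp (8 / (p + 1))" ..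
  have part1: "L \<le> M * ereal S"
  proof (cases "R = 0")
    case True
    then have "M = ereal b" unfolding M_def by simp
    then show ?thesis using LB True by simp
  next
    case R0: False
    show ?thesis
    proof (cases "R = 1")
      case True
      then have "M = ereal a" unfolding M_def using R0 by simp
      then show ?thesis using LA R0 by simp
    next
      case False
      then have "M = ereal (min a b)" unfolding M_def using R0 by (auto simp: min_def)
      moreover have "L \<le> ereal (min a b * S)"
        by (cases "a \<le> b") (use LA[OF R0] LB[OF False] in \<open>auto simp: min_def\<close>)
      ultimately show ?thesis by (metis times_ereal.simps(1))
    qed
  qed
  have part2: "M * ereal S \<le> ereal (exp (8 / (p + 1)) * S)"
  proof (cases "R \<ge> 1/2")
    case True
    then have R0: "R \<noteq> 0" by auto
    have "a \<le> exp (8 / (p + 1))" unfolding a_def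
    proof (subst exp_le_cancel_iff)
      have "4 / (R * (p + 1)) = (4 / R) / (p + 1)" by simp
      also have "\<dots> \<le> 8 / (p + 1)" using True p by (intro divide_right_mono) (auto simp: field_simps)
      finally show "4 / (R * (p + 1)) \<le> 8 / (p + 1)" .
    qed
    moreover have "M \<le> ereal a" unfolding M_def using R0 by simp
    ultimately have "M \<le> ereal (exp (8 / (p + 1)))" by (meson ereal_less_eq(3) order_trans)
    then have "M * ereal S \<le> ereal (exp (8 / (p + 1))) * ereal S" using S0 by (intro ereal_mult_right_mono) auto
    then show ?thesis by simp
  next
    case False
    then have R1: "R \<noteq> 1" and R2: "1 - R > 1/2" by auto
    have "b \<le> exp (8 / (p + 1))" unfolding b_def
    proof (subst exp_le_cancel_iff)
      have "4 / ((1 - R) * (p + 1)) = (4 / (1 - R)) / (p + 1)" by simp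
      also have "\<dots> \<le> 8 / (p + 1)" using R2 p by (intro divide_right_mono) (auto simp: field_simps)
      finally show "4 / ((1 - R) * (p + 1)) \<le> 8 / (p + 1)" .
    qed
    moreover have "M \<le> ereal b" unfolding M_def using R1 by simp
    ultimately have "M \<le> ereal (exp (8 / (p + 1)))" by (meson ereal_less_eq(3) order_trans)
    then have "M * ereal S \<le> ereal (exp (8 / (p + 1))) * ereal S" using S0 by (intro ereal_mult_right_mono) auto
    then show ?thesis by simp
  qed
  show ?thesis using part1 part2 unfolding L_def M_def S_def a_def b_def by simp
qed

end
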